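(* Let $k\ge1$, let $p_1,\dots,p_k$ be a pmf (the conditional pmf $P_{X_k}(x_i)=P_X(x_i)/q_k$ described in the context), and let $a=\frac{1}{\lambda q_k}>0$. For a vector of real codeword lengths $\ell=(\ell(x_1),\dots,\ell(x_k))$ write $\mathbb{E}[L]=\sum_{i=1}^k p_i\ell(x_i)$ and $\mathbb{E}[L^2]=\sum_{i=1}^k p_i\ell(x_i)^2$. Consider the problem $$\min_{\ell}\ \frac{\mathbb{E}[L^2]+2a\mathbb{E}[L]+2a^2}{2(\mathbb{E}[L]+a)}+\mathbb{E}[L]\quad\text{s.t.}\quad \sum_{i=1}^k 2^{-\ell(x_i)}\le 1,\ \ \ell(x_i)\in\mathbb{R}^+,\ i=1,\dots,k.$$ Then the age-optimal real codeword lengths (optimal solutions of this problem) satisfy $\sum_{i=1}^k 2^{-\ell(x_i)}=1$.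
   Context: Setting: update packets arrive at a transmitter as a Poisson process of rate $\lambda>0$, each carrying an i.i.d. realization of $X$ with pmf $P_X$ on $\{x_1,\dots,x_n\}$ ordered with non-increasing probabilities; only the $k$ most probable realizations are encoded, $q_k=\sum_{\ell=1}^kP_X(x_\ell)$, and $P_{X_k}(x_i)=P_X(x_i)/q_k$ for $i\le k$. The objective above is the long term average age at the receiver under this highest $k$ selective encoding scheme with blocking and service time equal to codeword length; the integrality constraint on lengths has been relaxed to positive reals. *)

theory Defs
  imports Complex_Main
begin

definition EL :: "nat \<Rightarrow> (nat \<Rightarrow> real) \<Rightarrow> (nat \<Rightarrow> real) \<Rightarrow> real" where
  "EL k p l = (\<Sum>i=1..k. p i * l i)"

definition EL2 :: "nat \<Rightarrow> (nat \<Rightarrow> real) \<Rightarrow> (nat \<Rightarrow> real) \<Rightarrow> real" where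
  "EL2 k p l = (\<Sum>i=1..k. p i * (l i)^2)"

definition age_obj :: "nat \<Rightarrow> (nat \<Rightarrow> real) \<Rightarrow> real \<Rightarrow> (nat \<Rightarrow> real) \<Rightarrow> real" where
  "age_obj k p a l =
     (EL2 k p l + 2 * a * EL k p l + 2 * a^2) / (2 * (EL k p l + a)) + EL k p l"

definition kraft_sum :: "nat \<Rightarrow> (nat \<Rightarrow> real) \<Rightarrow> real" where
  "kraft_sum k l = (\<Sum>i=1..k. 2 powr (- l i))"

definition feasible :: "nat \<Rightarrow> (nat \<Rightarrow> real) \<Rightarrow> bool" where
  "feasible k l \<longleftrightarrow> kraft_sum k l \<le> 1 \<and> (\<forall>i\<in>{1..k}. l i > 0)"

definition age_optimal :: "nat \<Rightarrow> (nat \<Rightarrow> real) \<Rightarrow> real \<Rightarrow> (nat \<Rightarrow> real) \<Rightarrow> bool" where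
  "age_optimal k p a l \<longleftrightarrow> feasible k l \<and>
     (\<forall>l'. feasible k l' \<longrightarrow> age_obj k p a l \<le> age_obj k p a l')"

end

theory Submission
  imports Defs
begin

lemma obj_form:
  assumes "EL k p l + a > 0"
  shows "age_obj k p a l = EL2 k p l / (2 * (EL k p l + a)) + a + EL k p l"
  using assms unfolding age_obj_def by (simp add: field_simps power2_eq_square)

theorem lemma1:
  fixes k :: nat and p :: "nat \<Rightarrow> real" and lam q :: real and l :: "nat \<Rightarrow> real"
  assumes "k \<ge> 1"
    and "\<forall>i\<in>{1..k}. p i > 0"
    and "(\<Sum>i=1..k. p i) = 1"
    and "lam > 0" and "0 < q" and "q \<le> 1"
    and "age_optimal k p (1 / (lam * q)) l"
  shows "kraft_sum k l = 1"
proof (rule ccontr)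
  assume ne: "kraft_sum k l \<noteq> 1"
  define a where "a = 1 / (lam * q)"
  have a0: "a > 0" using assms unfolding a_def by simp
  have feas: "feasible k l" and opt: "\<And>l'. feasible k l' \<Longrightarrow> age_obj k p a l \<le> age_obj k p a l'"
    using assms(7) unfolding age_optimal_def a_def by auto
  have lpos: "\<And>i. i \<in> {1..k} \<Longrightarrow> l i > 0" using feas unfolding feasible_def by auto
  define K where "K = kraft_sum k l"
  have K1: "K < 1" using feas ne unfolding K_def feasible_def by auto
  have K0: "K > 0" unfolding K_def kraft_sum_def using assms(1)
    by (intro sum_pos) auto
  define M where "M = Max (l ` {1..k})"
  have Mge: "\<And>i. i \<in> {1..k} \<Longrightarrow> l i \<le> M" unfolding M_def by auto
  have M0: "M > 0" using Mge[of 1] lpos[of 1] assms(1) by auto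
  have lgK: "log 2 K < 0" using K0 K1 by simp
  define d where "d = min (1/2) (- log 2 K / M)"
  have d0: "d > 0" using lgK M0 unfolding d_def by (simp add: field_simps)
  have d1: "d \<le> 1/2" unfolding d_def by (rule min.cobounded1)
  have dM: "d * M \<le> - log 2 K"
  proof -
    have "d \<le> - log 2 K / M" unfolding d_def by (rule min.cobounded2)
    hence "d * M \<le> (- log 2 K / M) * M" using M0 by (intro mult_right_mono) auto
    thus ?thesis using M0 by simp
  qed
  define c where "c = 1 - d"
  define l' where "l' = (\<lambda>i. c * l i)"
  have c0: "c > 0" "c < 1" using d0 d1 unfolding c_def by auto
  have kr: "kraft_sum k l' \<le> 1"
  proof -
    have "kraft_sum k l' = (\<Sum>i=1..k. 2 powr (- l i) * 2 powr (d * l i))"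
      unfolding kraft_sum_def l'_def c_def
      by (intro sum.cong refl) (simp add: powr_add[symmetric] algebra_simps)
    also have "\<dots> \<le> (\<Sum>i=1..k. 2 powr (- l i) * (1 / K))"
    proof (intro sum_mono mult_left_mono)
      fix i assume i: "i \<in> {1..k}"
      have "2 powr (d * l i) \<le> 2 powr (- log 2 K)"
        using Mge[OF i] d0 dM by (intro powr_mono) (auto intro: order.trans[OF mult_left_mono])
      also have "\<dots> = 1 / K" using K0 by (simp add: powr_minus_divide)
      finally show "2 powr (d * l i) \<le> 1 / K" .
    qed auto
    also have "\<dots> = K * (1 / K)" unfolding K_def kraft_sum_def by (rule sum_distrib_right[symmetric])
    also have "\<dots> = 1" using K0 by simp
    finally show ?thesis .
  qed
  have feas': "feasible k l'" using kr lpos c0 unfolding feasible_def l'_def by auto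
  have E0: "EL k p l > 0" unfolding EL_def using assms(1,2) lpos
    by (intro sum_pos) auto
  have S0: "EL2 k p l \<ge> 0" unfolding EL2_def using assms(2)
    by (intro sum_nonneg) (simp add: order_less_imp_le)
  have E': "EL k p l' = c * EL k p l" unfolding EL_def l'_def
    by (simp add: sum_distrib_left algebra_simps)
  have S': "EL2 k p l' = c^2 * EL2 k p l" unfolding EL2_def l'_def
    by (simp add: sum_distrib_left algebra_simps power2_eq_square)
  have "age_obj k p a l' = c^2 * EL2 k p l / (2 * (c * EL k p l + a)) + a + c * EL k p l"
    proof -
    have "c * EL k p l > 0" using E0 c0 by simp
    hence "EL k p l' + a > 0" using E' a0 by linarith
    thus ?thesis using obj_form[of k p l' a] E' S' by simp
  qed
  also have "\<dots> < EL2 k p l / (2 * (EL k p l + a)) + a + EL k p l"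
  proof -
    have "c^2 * (EL k p l + a) \<le> c * EL k p l + a"
    proof -
      have "c^2 \<le> c" using c0 by (simp add: power2_eq_square)
      have "c^2 * (EL k p l + a) = c^2 * EL k p l + c^2 * a" by (simp add: algebra_simps)
      also have "\<dots> \<le> c * EL k p l + a" using c0 E0 a0 \<open>c^2 \<le> c\<close>
        by (intro add_mono mult_right_mono) (auto simp: power2_eq_square mult_le_one less_imp_le)
      finally show ?thesis .
    qed
    have "c^2 * EL2 k p l / (2 * (c * EL k p l + a)) \<le> EL2 k p l / (2 * (EL k p l + a))"
    proof -
      let ?S = "EL2 k p l" and ?E = "EL k p l"
      have p1: "2 * (c * ?E + a) > 0" using E0 a0 c0 by (simp add: add_pos_pos)
      have p2: "2 * (?E + a) > 0" using E0 a0 by simp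
      have "c^2 * ?S * (2 * (?E + a)) = ?S * (2 * (c^2 * (?E + a)))" by (simp add: algebra_simps)
      also have "\<dots> \<le> ?S * (2 * (c * ?E + a))" using S0 \<open>c^2 * (?E + a) \<le> c * ?E + a\<close>
        by (intro mult_left_mono) auto
      finally have "c^2 * ?S * (2 * (?E + a)) \<le> ?S * (2 * (c * ?E + a))" .
      thus ?thesis using p1 p2 by (simp add: divide_le_eq le_divide_eq mult.commute)
    qed
    moreover have "c * EL k p l < EL k p l" using c0 E0 by simp
    ultimately show ?thesis by linarith
  qed
  also have "\<dots> = age_obj k p a l" using obj_form[of k p l a] E0 a0 by simp
  finally show False using opt[OF feas'] by simp
qed

end
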